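(* Let $P$ be a full-dimensional convex polytope in $\mathbb{R}^d$ and let $f:\mathbb{R}^d\to\mathbb{C}$ be continuous on $P$ and equal to $0$ outside $P$. Then $$\sum_{x\in\mathbb{Z}^d}f(x)\,\omega_P(x) = \lim_{\epsilon\to0^+}\sum_{x\in\mathbb{Z}^d}(f*\mathcal{G}_\epsilon)(x).$$
   Context: $\mathcal{G}_\epsilon(x) := \epsilon^{-d/2}e^{-\pi\|x\|^2/\epsilon}$ for $\epsilon>0$; $*$ is convolution; $\omega_P(x) := \lim_{r\to0^+}\frac{\mathrm{vol}(B(x,r)\cap P)}{\mathrm{vol}(B(x,r))}$. The left-hand side is a finite sum since $P$ is compact. *)

theory Defs
  imports "HOL-Analysis.Analysis"
begin

definition int_lattice :: "(real ^ 'n) set" where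
  "int_lattice = {x. \<forall>i. x $ i \<in> \<int>}"

definition gauss_kernel :: "real \<Rightarrow> real ^ 'n \<Rightarrow> real" where
  "gauss_kernel eps x = eps powr (- real CARD('n) / 2) * exp (- pi * (norm x)^2 / eps)"

definition gauss_conv :: "real \<Rightarrow> (real ^ 'n \<Rightarrow> complex) \<Rightarrow> real ^ 'n \<Rightarrow> complex" where
  "gauss_conv eps f x = (\<integral>y. f y * complex_of_real (gauss_kernel eps (x - y)) \<partial>lborel)"

definition solid_angle :: "(real ^ 'n) set \<Rightarrow> real ^ 'n \<Rightarrow> real" where
  "solid_angle P x = Lim (at_right 0)
     (\<lambda>r. measure lebesgue (ball x r \<inter> P) / measure lebesgue (ball x r))"

end

theory Submission
  imports Defs "HOL-Probability.Probability"
begin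


lemma gauss1:
  assumes a: "a > 0"
  shows "(\<integral>\<^sup>+x. ennreal (exp (- a * x\<^sup>2)) \<partial>lborel) = ennreal (sqrt (pi / a))"
proof -
  define s where "s = sqrt (1 / (2*a))"
  have s: "s > 0" "s\<^sup>2 = 1/(2*a)" using a by (auto simp: s_def)
  have eq: "exp (- a * x\<^sup>2) = sqrt (pi / a) * normal_density 0 s x" for x
  proof -
    have "sqrt (2 * pi * s\<^sup>2) = sqrt (pi / a)" using s a by simp
    moreover have "-(x - 0)\<^sup>2/ (2 * s\<^sup>2) = - a * x\<^sup>2" using s a by (simp add: field_simps)
    ultimately show ?thesis using a by (simp add: normal_density_def)
  qed
  have "(\<integral>\<^sup>+x. ennreal (exp (- a * x\<^sup>2)) \<partial>lborel) = (\<integral>\<^sup>+x. ennreal (sqrt (pi / a) * normal_density 0 s x) \<partial>lborel)"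
    by (intro nn_integral_cong) (simp only: eq)
  also have "\<dots> = ennreal (\<integral>x. sqrt (pi / a) * normal_density 0 s x \<partial>lborel)"
    using s a by (intro nn_integral_eq_integral AE_I2) (auto intro!: mult_nonneg_nonneg normal_density_nonneg)
  also have "\<dots> = ennreal (sqrt (pi / a))" using s by simp
  finally show ?thesis .
qed



lemma gaussn:
  fixes a :: real assumes a: "a > 0"
  shows "(\<integral>\<^sup>+x. ennreal (exp (- a * (norm x)\<^sup>2)) \<partial>(lborel::('a::euclidean_space) measure))
     = ennreal (sqrt (pi / a) ^ DIM('a))"
proof -
  have eq: "exp (- a * (norm x)\<^sup>2) = (\<Prod>b\<in>Basis. exp (- a * (x \<bullet> b)\<^sup>2))" for x :: 'a
  proof -
    have "(norm x)\<^sup>2 = (\<Sum>b\<in>Basis. (x \<bullet> b)\<^sup>2)"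
      by (metis (no_types, lifting) power2_norm_eq_inner euclidean_inner power2_eq_square sum.cong)
    then show ?thesis by (simp add: sum_distrib_left exp_sum[symmetric] sum_negf)
  qed
  have "(\<integral>\<^sup>+x. ennreal (exp (- a * (norm x)\<^sup>2)) \<partial>(lborel::'a measure))
     = (\<integral>\<^sup>+x. (\<Prod>b\<in>Basis. ennreal (exp (- a * (x \<bullet> b)\<^sup>2))) \<partial>(lborel::'a measure))"
    by (intro nn_integral_cong) (simp only: eq prod_ennreal exp_ge_zero)
  also have "\<dots> = (\<Prod>b\<in>(Basis::'a set). (\<integral>\<^sup>+x. ennreal (exp (- a * x\<^sup>2)) \<partial>lborel))"
    by (rule nn_integral_lborel_prod) auto
  also have "\<dots> = ennreal (sqrt (pi / a) ^ DIM('a))"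
    using gauss1[OF a] a by (simp add: ennreal_power)
  finally show ?thesis .
qed



lemma exp_mixture:
  fixes a r :: real assumes a: "a > 0" and r: "r \<ge> 0"
  shows "ennreal (exp (- a * r\<^sup>2)) = (\<integral>\<^sup>+s. ennreal (2 * a * s * exp (- a * s\<^sup>2)) * indicator {r<..} s \<partial>lborel)"
proof -
  have lim: "((\<lambda>s::real. - exp (- a * s\<^sup>2)) \<longlongrightarrow> 0) at_top"
  proof -
    have "filterlim (\<lambda>s::real. s * s) at_top at_top"
      by (intro filterlim_at_top_mult_at_top filterlim_ident)
    then have "filterlim (\<lambda>s::real. a * (s * s)) at_top at_top"
      using a by (intro filterlim_tendsto_pos_mult_at_top[OF tendsto_const]) auto
    then have "filterlim (\<lambda>s::real. - (a * (s * s))) at_bot at_top"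
      by (simp add: filterlim_uminus_at_top[symmetric])
    then have "filterlim (\<lambda>s::real. - a * s\<^sup>2) at_bot at_top"
      by (simp add: power2_eq_square)
    then have "((\<lambda>s::real. exp (- a * s\<^sup>2)) \<longlongrightarrow> 0) at_top"
      by (rule filterlim_compose[OF exp_at_bot])
    then show ?thesis using tendsto_minus by fastforce
  qed
  have "(\<integral>\<^sup>+s. ennreal (2 * a * s * exp (- a * s\<^sup>2)) * indicator {r..} s \<partial>lborel) = 0 - (- exp (- a * r\<^sup>2))"
  proof (rule nn_integral_FTC_atLeast[OF _ _ _ lim])
    show "(\<lambda>s. 2 * a * s * exp (- a * s\<^sup>2)) \<in> borel_measurable borel" by measurable
    show "DERIV (\<lambda>s. - exp (- a * s\<^sup>2)) x :> 2 * a * x * exp (- a * x\<^sup>2)" for x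
      by (auto intro!: derivative_eq_intros simp: algebra_simps)
    show "0 \<le> 2 * a * x * exp (- a * x\<^sup>2)" if "r \<le> x" for x
      using that r a by (intro mult_nonneg_nonneg) auto
  qed
  also have "\<dots> = exp (- a * r\<^sup>2)" by simp
  finally have *: "(\<integral>\<^sup>+s. ennreal (2 * a * s * exp (- a * s\<^sup>2)) * indicator {r..} s \<partial>lborel) = ennreal (exp (- a * r\<^sup>2))" .
  have "(\<integral>\<^sup>+s. ennreal (2 * a * s * exp (- a * s\<^sup>2)) * indicator {r<..} s \<partial>lborel) =
        (\<integral>\<^sup>+s. ennreal (2 * a * s * exp (- a * s\<^sup>2)) * indicator {r..} s \<partial>lborel)"
    by (intro nn_integral_cong_AE AE_I[where N="{r}"]) (auto split: split_indicator)
  with * show ?thesis by simp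
qed



lemma cone_nn1:
  fixes K :: "'a::euclidean_space set" and a :: real
  assumes Kb[measurable]: "K \<in> sets borel" and a: "a > 0"
  shows "(\<integral>\<^sup>+v. indicator K v * ennreal (exp (- a * (norm v)\<^sup>2)) \<partial>lborel)
       = (\<integral>\<^sup>+s. ennreal (2 * a * s * exp (- a * s\<^sup>2)) * emeasure lborel (K \<inter> ball 0 s) \<partial>lborel)"
proof -
  have "(\<integral>\<^sup>+v. indicator K v * ennreal (exp (- a * (norm v)\<^sup>2)) \<partial>lborel)
      = (\<integral>\<^sup>+v. (\<integral>\<^sup>+s. indicator K v * (ennreal (2 * a * s * exp (- a * s\<^sup>2)) * indicator {norm v<..} s) \<partial>lborel) \<partial>(lborel::'a measure))"
    by (intro nn_integral_cong, subst exp_mixture[OF a norm_ge_zero]) (simp add: nn_integral_cmult)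
  also have "\<dots> = (\<integral>\<^sup>+s. (\<integral>\<^sup>+v. indicator K v * (ennreal (2 * a * s * exp (- a * s\<^sup>2)) * indicator {norm v<..} s) \<partial>(lborel::'a measure)) \<partial>lborel)"
  proof (rule lborel_pair.Fubini'[symmetric])
    have [measurable]: "Measurable.pred (borel \<Otimes>\<^sub>M borel) (\<lambda>x::'a\<times>real. snd x \<in> {norm (fst x)<..})"
      unfolding greaterThan_iff by measurable
    show "(\<lambda>(v::'a, s). indicator K v * (ennreal (2 * a * s * exp (- a * s\<^sup>2)) * indicator {norm v<..} s))
        \<in> borel_measurable (lborel \<Otimes>\<^sub>M lborel)" by measurable
  qed
  also have "\<dots> = (\<integral>\<^sup>+s. ennreal (2 * a * s * exp (- a * s\<^sup>2)) * emeasure lborel (K \<inter> ball 0 s) \<partial>lborel)"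
  proof (intro nn_integral_cong)
    fix s :: real
    have "(\<integral>\<^sup>+v. indicator K v * (ennreal (2 * a * s * exp (- a * s\<^sup>2)) * indicator {norm v<..} s) \<partial>(lborel::'a measure))
       = (\<integral>\<^sup>+v. ennreal (2 * a * s * exp (- a * s\<^sup>2)) * indicator (K \<inter> ball 0 s) v \<partial>(lborel::'a measure))"
      by (intro nn_integral_cong) (auto split: split_indicator simp: dist_norm)
    also have "\<dots> = ennreal (2 * a * s * exp (- a * s\<^sup>2)) * emeasure lborel (K \<inter> ball 0 s)"
      by (subst nn_integral_cmult) (auto intro!: borel_measurable_indicator)
    finally show "(\<integral>\<^sup>+v. indicator K v * (ennreal (2 * a * s * exp (- a * s\<^sup>2)) * indicator {norm v<..} s) \<partial>(lborel::'a measure))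
       = ennreal (2 * a * s * exp (- a * s\<^sup>2)) * emeasure lborel (K \<inter> ball 0 s)" .
  qed
  finally show ?thesis .
qed

lemma cone_ball_scale:
  fixes K :: "'a::euclidean_space set"
  assumes Kb[measurable]: "K \<in> sets borel" and cone: "\<And>v c. v \<in> K \<Longrightarrow> c > 0 \<Longrightarrow> c *\<^sub>R v \<in> K"
    and s: "s > 0"
  shows "emeasure lborel (K \<inter> ball 0 s) = ennreal (s ^ DIM('a)) * emeasure lborel (K \<inter> ball 0 1)"
proof -
  have img: "(\<lambda>x. s *\<^sub>R x + 0) ` (K \<inter> ball 0 1) = K \<inter> ball 0 s"
  proof safe
    fix x assume "x \<in> K" "x \<in> ball (0::'a) s"
    then show "x \<in> (\<lambda>x. s *\<^sub>R x + 0) ` (K \<inter> ball 0 1)"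
      using s cone[of x "1/s"] by (intro image_eqI[of _ _ "(1/s) *\<^sub>R x"]) (auto simp: dist_norm)
  qed (use s cone in \<open>auto simp: dist_norm\<close>)
  have "emeasure lebesgue (K \<inter> ball 0 s) = \<bar>s\<bar> ^ DIM('a) * emeasure lebesgue (K \<inter> ball 0 1)"
    using emeasure_lebesgue_affine[of s 0 "K \<inter> ball 0 1"] img by simp
  then show ?thesis using s by (simp add: ennreal_power)
qed



lemma cone_nn2:
  fixes K :: "'a::euclidean_space set" and a :: real
  assumes Kb[measurable]: "K \<in> sets borel" and cone: "\<And>v c. v \<in> K \<Longrightarrow> c > 0 \<Longrightarrow> c *\<^sub>R v \<in> K"
    and a: "a > 0"
  shows "(\<integral>\<^sup>+v. indicator K v * ennreal (exp (- a * (norm v)\<^sup>2)) \<partial>lborel)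
       = (\<integral>\<^sup>+s. ennreal (2 * a * s * exp (- a * s\<^sup>2)) * ennreal (s ^ DIM('a)) \<partial>lborel) * emeasure lborel (K \<inter> ball 0 1)"
proof -
  have "(\<integral>\<^sup>+v. indicator K v * ennreal (exp (- a * (norm v)\<^sup>2)) \<partial>lborel)
       = (\<integral>\<^sup>+s. ennreal (2 * a * s * exp (- a * s\<^sup>2)) * emeasure lborel (K \<inter> ball 0 s) \<partial>lborel)"
    by (rule cone_nn1[OF Kb a])
  also have "\<dots> = (\<integral>\<^sup>+s. ennreal (2 * a * s * exp (- a * s\<^sup>2)) * ennreal (s ^ DIM('a)) * emeasure lborel (K \<inter> ball 0 1) \<partial>lborel)"
  proof (intro nn_integral_cong)
    fix s :: real
    show "ennreal (2 * a * s * exp (- a * s\<^sup>2)) * emeasure lborel (K \<inter> ball 0 s) =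
          ennreal (2 * a * s * exp (- a * s\<^sup>2)) * ennreal (s ^ DIM('a)) * emeasure lborel (K \<inter> ball 0 1)"
    proof (cases "s > 0")
      case True
      then show ?thesis using cone_ball_scale[OF Kb cone True] by (simp add: mult.assoc)
    next
      case False
      then have "2 * a * s \<le> 0" using a by (simp add: mult_nonneg_nonpos)
      then have "2 * a * s * exp (- a * s\<^sup>2) \<le> 0"
        by (rule mult_nonpos_nonneg) auto
      then have "ennreal (2 * a * s * exp (- a * s\<^sup>2)) = 0" by (simp add: ennreal_eq_0_iff)
      then show ?thesis by simp
    qed
  qed
  also have "\<dots> = (\<integral>\<^sup>+s. ennreal (2 * a * s * exp (- a * s\<^sup>2)) * ennreal (s ^ DIM('a)) \<partial>lborel) * emeasure lborel (K \<inter> ball 0 1)"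
    by (rule nn_integral_multc) measurable
  finally show ?thesis .
qed

lemma cone_nn:
  fixes K :: "'a::euclidean_space set" and a :: real
  assumes Kb[measurable]: "K \<in> sets borel" and cone: "\<And>v c. v \<in> K \<Longrightarrow> c > 0 \<Longrightarrow> c *\<^sub>R v \<in> K"
    and a: "a > 0"
  shows "(\<integral>\<^sup>+v. indicator K v * ennreal (exp (- a * (norm v)\<^sup>2)) \<partial>lborel)
       = ennreal (measure lborel (K \<inter> ball 0 1) / measure lborel (ball (0::'a) 1) * sqrt (pi / a) ^ DIM('a))"
proof -
  define J where "J = (\<integral>\<^sup>+s. ennreal (2 * a * s * exp (- a * s\<^sup>2)) * ennreal (s ^ DIM('a)) \<partial>lborel)"
  define m1 where "m1 = measure lborel (ball (0::'a) 1)"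
  have m1: "m1 > 0" unfolding m1_def by (rule content_ball_pos) simp
  have em1: "emeasure lborel (ball (0::'a) 1) = ennreal m1"
    unfolding m1_def using emeasure_lborel_ball_finite[of "0::'a" 1]
    by (intro emeasure_eq_ennreal_measure) auto
  have "ennreal (sqrt (pi / a) ^ DIM('a)) = J * ennreal m1"
    using cone_nn2[of "UNIV::'a set" a] a gaussn[OF a, where 'a='a] em1 by (simp add: J_def)
  then have "J \<noteq> \<infinity>" using m1 by (auto simp: ennreal_mult_eq_top_iff)
  then obtain j where j: "J = ennreal j" "j \<ge> 0" by (cases J) auto
  have "ennreal (sqrt (pi / a) ^ DIM('a)) = ennreal (j * m1)"
    using \<open>ennreal (sqrt (pi / a) ^ DIM('a)) = J * ennreal m1\<close> j m1 by (simp add: ennreal_mult)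
  then have "sqrt (pi / a) ^ DIM('a) = j * m1" using j m1 a by (subst (asm) ennreal_inj) auto
  then have jv: "j = sqrt (pi / a) ^ DIM('a) / m1" using m1 by (simp add: field_simps)
  have "emeasure lborel (K \<inter> ball 0 1) = ennreal (measure lborel (K \<inter> ball 0 1))"
  proof (rule emeasure_eq_ennreal_measure)
    have "emeasure lborel (K \<inter> ball 0 1) \<le> emeasure lborel (ball (0::'a) 1)"
      by (rule emeasure_mono) auto
    then show "emeasure lborel (K \<inter> ball 0 1) \<noteq> \<top>"
      using emeasure_lborel_ball_finite[of "0::'a" 1] by (auto simp: top_unique)
  qed
  then show ?thesis
    using cone_nn2[OF Kb cone a] j jv m1 unfolding J_def[symmetric] m1_def[symmetric]
    by (simp add: ennreal_mult'[symmetric] mult.commute)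
qed



lemma gk_nonneg: "gauss_kernel eps v \<ge> 0"
  unfolding gauss_kernel_def by simp

lemma gk_minus: "gauss_kernel eps (x - y) = gauss_kernel eps (y - x)"
  unfolding gauss_kernel_def by (simp add: norm_minus_commute)

lemma gk_measurable[measurable]: "gauss_kernel eps \<in> borel_measurable borel"
  unfolding gauss_kernel_def[abs_def] by measurable

definition theta :: "('a::euclidean_space) set \<Rightarrow> real" where
  "theta K = measure lborel (K \<inter> ball 0 1) / measure lborel (ball (0::'a) 1)"

lemma theta_nonneg: "theta K \<ge> 0" unfolding theta_def by simp

lemma theta_UNIV: "theta UNIV = 1"
  unfolding theta_def using content_ball_pos[of 1 0] by simp

lemma gk_cone_nn:
  fixes K :: "(real ^ 'n) set"
  assumes Kb[measurable]: "K \<in> sets borel" and cone: "\<And>v c. v \<in> K \<Longrightarrow> c > 0 \<Longrightarrow> c *\<^sub>R v \<in> K"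
    and eps: "eps > 0"
  shows "(\<integral>\<^sup>+v. indicator K v * ennreal (gauss_kernel eps v) \<partial>lborel) = ennreal (theta K)"
proof -
  define a where "a = pi / eps"
  have a: "a > 0" using eps by (simp add: a_def)
  define c where "c = eps powr (- real CARD('n) / 2)"
  have c: "c \<ge> 0" by (simp add: c_def)
  have gk: "gauss_kernel eps v = c * exp (- a * (norm v)\<^sup>2)" for v :: "real^'n"
    unfolding gauss_kernel_def c_def a_def by simp
  have "(\<integral>\<^sup>+v. indicator K v * ennreal (gauss_kernel eps v) \<partial>lborel)
      = (\<integral>\<^sup>+v. ennreal c * (indicator K v * ennreal (exp (- a * (norm v)\<^sup>2))) \<partial>lborel)"
    by (intro nn_integral_cong) (simp add: gk ennreal_mult c mult_ac)
  also have "\<dots> = ennreal c * (\<integral>\<^sup>+v. indicator K v * ennreal (exp (- a * (norm v)\<^sup>2)) \<partial>lborel)"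
    by (rule nn_integral_cmult) measurable
  also have "\<dots> = ennreal c * ennreal (theta K * sqrt (pi / a) ^ DIM(real^'n))"
    using cone_nn[OF Kb cone a] by (simp add: theta_def)
  also have "c * sqrt (pi / a) ^ DIM(real^'n) = 1"
  proof -
    have "sqrt (pi / a) = eps powr (1/2)" using eps by (simp add: a_def powr_half_sqrt)
    then have "sqrt (pi / a) ^ DIM(real^'n) = eps powr (real CARD('n) / 2)"
      using eps by (simp add: powr_realpow[symmetric] powr_powr)
    then show ?thesis using eps by (simp add: c_def powr_add[symmetric])
  qed
  then have "ennreal c * ennreal (theta K * sqrt (pi / a) ^ DIM(real^'n)) = ennreal (theta K)"
  proof -
    have "ennreal c * ennreal (theta K * sqrt (pi / a) ^ DIM(real^'n)) = ennreal (c * (theta K * sqrt (pi / a) ^ DIM(real^'n)))"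
      using c by (rule ennreal_mult'[symmetric])
    also have "c * (theta K * sqrt (pi / a) ^ DIM(real^'n)) = theta K * (c * sqrt (pi / a) ^ DIM(real^'n))"
      by (simp add: mult_ac)
    finally show ?thesis using \<open>c * sqrt (pi / a) ^ DIM(real^'n) = 1\<close> by simp
  qed
  finally show ?thesis .
qed

lemma nn_integral_translate:
  fixes g :: "'a::euclidean_space \<Rightarrow> ennreal"
  assumes [measurable]: "g \<in> borel_measurable borel"
  shows "(\<integral>\<^sup>+y. g (y - x) \<partial>lborel) = (\<integral>\<^sup>+v. g v \<partial>lborel)"
proof -
  have "(\<integral>\<^sup>+y. g (y - x) \<partial>lborel) = (\<integral>\<^sup>+y. g (y - x) \<partial>distr lborel borel ((+) x))"
    by (simp add: lborel_distr_plus)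
  also have "\<dots> = (\<integral>\<^sup>+v. g (x + v - x) \<partial>lborel)"
    by (subst nn_integral_distr) auto
  finally show ?thesis by simp
qed

lemma gk_cone_integral:
  fixes K :: "(real ^ 'n) set"
  assumes Kb[measurable]: "K \<in> sets borel" and cone: "\<And>v c. v \<in> K \<Longrightarrow> c > 0 \<Longrightarrow> c *\<^sub>R v \<in> K"
    and eps: "eps > 0"
  shows "has_bochner_integral lborel (\<lambda>y. indicator K (y - x) * gauss_kernel eps (x - y)) (theta K)"
proof (rule has_bochner_integral_nn_integral)
  show "(\<lambda>y. indicator K (y - x) * gauss_kernel eps (x - y)) \<in> borel_measurable lborel" by measurable
  show "0 \<le> theta K" by (rule theta_nonneg)
  show "AE y in lborel. 0 \<le> indicator K (y - x) * gauss_kernel eps (x - y)"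
    by (simp add: gk_nonneg)
  have "(\<integral>\<^sup>+y. ennreal (indicator K (y - x) * gauss_kernel eps (x - y)) \<partial>lborel)
      = (\<integral>\<^sup>+y. (\<lambda>v. indicator K v * ennreal (gauss_kernel eps v)) (y - x) \<partial>lborel)"
    by (intro nn_integral_cong) (simp add: gk_minus[of eps x] split: split_indicator)
  also have "\<dots> = (\<integral>\<^sup>+v. indicator K v * ennreal (gauss_kernel eps v) \<partial>lborel)"
    by (rule nn_integral_translate) measurable
  also have "\<dots> = ennreal (theta K)" by (rule gk_cone_nn[OF Kb cone eps])
  finally show "(\<integral>\<^sup>+y. ennreal (indicator K (y - x) * gauss_kernel eps (x - y)) \<partial>lborel) = ennreal (theta K)" .
qed



lemma gk_total:
  fixes x :: "real ^ 'n"
  assumes eps: "eps > 0"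
  shows "integrable lborel (\<lambda>y. gauss_kernel eps (x - y))"
    and "(\<integral>y. gauss_kernel eps (x - y) \<partial>lborel) = 1"
proof -
  have h: "has_bochner_integral lborel (\<lambda>y. gauss_kernel eps (x - y)) 1"
    using gk_cone_integral[of UNIV eps x] eps by (simp add: theta_UNIV)
  show "integrable lborel (\<lambda>y. gauss_kernel eps (x - y))" using h by (rule integrable.intros)
  show "(\<integral>y. gauss_kernel eps (x - y) \<partial>lborel) = 1" using h by (rule has_bochner_integral_integral_eq)
qed

lemma gk_tail_pointwise:
  fixes v :: "real ^ 'n"
  assumes eps: "eps > 0" and d: "\<delta> \<le> norm v" "0 \<le> \<delta>"
  shows "gauss_kernel eps v \<le> (2 powr (real CARD('n) / 2) * exp (- pi * \<delta>\<^sup>2 / (2 * eps))) * gauss_kernel (2 * eps) v"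
proof -
  have "\<delta>\<^sup>2 \<le> (norm v)\<^sup>2" using d by (intro power_mono) auto
  then have e: "exp (- pi * (norm v)\<^sup>2 / eps) \<le> exp (- pi * \<delta>\<^sup>2 / (2 * eps)) * exp (- pi * (norm v)\<^sup>2 / (2 * eps))"
    using eps by (simp add: exp_add[symmetric] field_simps)
  have p: "eps powr (- real CARD('n) / 2) = 2 powr (real CARD('n) / 2) * (2 * eps) powr (- real CARD('n) / 2)"
    using eps by (simp add: powr_mult powr_minus field_simps)
  have q: "(2 * eps) powr (- real CARD('n) / 2) \<ge> 0" by simp
  show ?thesis
    unfolding gauss_kernel_def p using mult_left_mono[OF e q]
    by (simp add: mult_ac)
qed

lemma gk_tail:
  fixes x :: "real ^ 'n"
  assumes eps: "eps > 0" and d: "0 \<le> \<delta>"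
  shows "integrable lborel (\<lambda>y. indicator {y. \<delta> \<le> dist x y} y * gauss_kernel eps (x - y))"
    and "(\<integral>y. indicator {y. \<delta> \<le> dist x y} y * gauss_kernel eps (x - y) \<partial>lborel)
           \<le> 2 powr (real CARD('n) / 2) * exp (- pi * \<delta>\<^sup>2 / (2 * eps))"
proof -
  define C where "C = 2 powr (real CARD('n) / 2) * exp (- pi * \<delta>\<^sup>2 / (2 * eps))"
  have eps2: "2 * eps > 0" using eps by simp
  have le: "indicator {y. \<delta> \<le> dist x y} y * gauss_kernel eps (x - y) \<le> C * gauss_kernel (2 * eps) (x - y)" for y
  proof (cases "\<delta> \<le> dist x y")
    case True
    then show ?thesis using gk_tail_pointwise[OF eps _ d, of "x - y"] by (simp add: C_def dist_norm)
  next
    case False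
    then show ?thesis using gk_nonneg[of "2*eps" "x - y"] by (simp add: C_def)
  qed
  have int2: "integrable lborel (\<lambda>y. C * gauss_kernel (2 * eps) (x - y))"
    using gk_total(1)[OF eps2, of x] by simp
  show int1: "integrable lborel (\<lambda>y. indicator {y. \<delta> \<le> dist x y} y * gauss_kernel eps (x - y))"
  proof (rule Bochner_Integration.integrable_bound[OF int2])
    show "(\<lambda>y. indicator {y. \<delta> \<le> dist x y} y * gauss_kernel eps (x - y)) \<in> borel_measurable lborel"
      by measurable
    show "AE y in lborel. norm (indicator {y. \<delta> \<le> dist x y} y * gauss_kernel eps (x - y)) \<le> norm (C * gauss_kernel (2 * eps) (x - y))"
    proof (intro AE_I2)
      fix y
      have "0 \<le> indicator {y. \<delta> \<le> dist x y} y * gauss_kernel eps (x - y)" by (simp add: gk_nonneg)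
      then show "norm (indicator {y. \<delta> \<le> dist x y} y * gauss_kernel eps (x - y)) \<le> norm (C * gauss_kernel (2 * eps) (x - y))"
        using le[of y] by (metis real_norm_def abs_of_nonneg abs_ge_self order_trans)
    qed
  qed
  have "(\<integral>y. indicator {y. \<delta> \<le> dist x y} y * gauss_kernel eps (x - y) \<partial>lborel) \<le> (\<integral>y. C * gauss_kernel (2 * eps) (x - y) \<partial>lborel)"
    by (rule integral_mono[OF int1 int2 le])
  also have "\<dots> = C" using gk_total(2)[OF eps2, of x] by simp
  finally show "(\<integral>y. indicator {y. \<delta> \<le> dist x y} y * gauss_kernel eps (x - y) \<partial>lborel)
           \<le> 2 powr (real CARD('n) / 2) * exp (- pi * \<delta>\<^sup>2 / (2 * eps))" by (simp add: C_def)
qed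



lemma exp_lim0:
  fixes c :: real assumes c: "c > 0"
  shows "((\<lambda>e. exp (- c / e)) \<longlongrightarrow> 0) (at_right 0)"
proof -
  have "filterlim (\<lambda>e::real. c * inverse e) at_top (at_right 0)"
    using c by (intro filterlim_tendsto_pos_mult_at_top[OF tendsto_const] filterlim_inverse_at_top_right) auto
  then have "filterlim (\<lambda>e::real. - (c * inverse e)) at_bot (at_right 0)"
    by (simp add: filterlim_uminus_at_top[symmetric])
  then have "((\<lambda>e. exp (- (c * inverse e))) \<longlongrightarrow> 0) (at_right 0)"
    by (rule filterlim_compose[OF exp_at_bot])
  then show ?thesis by (simp add: divide_inverse)
qed

lemma conv_integrable:
  fixes f :: "real ^ 'n \<Rightarrow> complex" and x :: "real ^ 'n"
  assumes fm[measurable]: "f \<in> borel_measurable lborel" and M: "\<And>y. norm (f y) \<le> M" and eps: "eps > 0"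
  shows "integrable lborel (\<lambda>y. f y * complex_of_real (gauss_kernel eps (x - y)))"
proof (rule Bochner_Integration.integrable_bound)
  show "integrable lborel (\<lambda>y. M * gauss_kernel eps (x - y))"
    using gk_total(1)[OF eps, of x] by simp
  show "(\<lambda>y. f y * complex_of_real (gauss_kernel eps (x - y))) \<in> borel_measurable lborel" by measurable
  have M0: "M \<ge> 0" using M[of 0] norm_ge_zero order_trans by blast
  show "AE y in lborel. norm (f y * complex_of_real (gauss_kernel eps (x - y))) \<le> norm (M * gauss_kernel eps (x - y))"
    using M M0 by (intro AE_I2) (simp add: norm_mult gk_nonneg abs_mult mult_right_mono)
qed

lemma conv_bound:
  fixes f :: "real ^ 'n \<Rightarrow> complex" and x :: "real ^ 'n"
  assumes fm[measurable]: "f \<in> borel_measurable lborel" and M: "\<And>y. norm (f y) \<le> M" and eps: "eps > 0"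
    and d: "0 \<le> \<delta>" and far: "\<And>y. f y \<noteq> 0 \<Longrightarrow> \<delta> \<le> dist x y"
  shows "norm (gauss_conv eps f x) \<le> M * (2 powr (real CARD('n) / 2) * exp (- pi * \<delta>\<^sup>2 / (2 * eps)))"
proof -
  have M0: "M \<ge> 0" using M[of 0] norm_ge_zero order_trans by blast
  note ci = conv_integrable[OF fm M eps, of x]
  note ti = gk_tail[OF eps d, of x]
  have "norm (gauss_conv eps f x) \<le> (\<integral>y. norm (f y * complex_of_real (gauss_kernel eps (x - y))) \<partial>lborel)"
    unfolding gauss_conv_def by (rule integral_norm_bound)
  also have "\<dots> \<le> (\<integral>y. M * (indicator {y. \<delta> \<le> dist x y} y * gauss_kernel eps (x - y)) \<partial>lborel)"
  proof (rule integral_mono)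
    show "integrable lborel (\<lambda>y. norm (f y * complex_of_real (gauss_kernel eps (x - y))))"
      using ci by (rule integrable_norm)
    show "integrable lborel (\<lambda>y. M * (indicator {y. \<delta> \<le> dist x y} y * gauss_kernel eps (x - y)))"
      using ti(1) by simp
    fix y
    show "norm (f y * complex_of_real (gauss_kernel eps (x - y))) \<le> M * (indicator {y. \<delta> \<le> dist x y} y * gauss_kernel eps (x - y))"
    proof (cases "f y = 0")
      case True then show ?thesis using M0 by (simp add: gk_nonneg)
    next
      case False
      then have "\<delta> \<le> dist x y" by (rule far)
      then show ?thesis using M[of y] by (simp add: norm_mult gk_nonneg mult_right_mono)
    qed
  qed
  also have "\<dots> = M * (\<integral>y. indicator {y. \<delta> \<le> dist x y} y * gauss_kernel eps (x - y) \<partial>lborel)"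
    by simp
  also have "\<dots> \<le> M * (2 powr (real CARD('n) / 2) * exp (- pi * \<delta>\<^sup>2 / (2 * eps)))"
    using ti(2) M0 by (rule mult_left_mono)
  finally show ?thesis .
qed



lemma conv_limit_point:
  fixes f :: "real ^ 'n \<Rightarrow> complex" and x :: "real ^ 'n" and K :: "(real ^ 'n) set"
  assumes fm[measurable]: "f \<in> borel_measurable lborel" and M: "\<And>y. norm (f y) \<le> M"
    and Kb[measurable]: "K \<in> sets borel" and cone: "\<And>v c. v \<in> K \<Longrightarrow> c > 0 \<Longrightarrow> c *\<^sub>R v \<in> K"
    and near: "\<And>\<eta>. \<eta> > 0 \<Longrightarrow> \<exists>\<delta>>0. \<forall>y. dist x y < \<delta> \<longrightarrow> norm (f y - f x * complex_of_real (indicator K (y - x))) \<le> \<eta>"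
  shows "((\<lambda>eps. gauss_conv eps f x) \<longlongrightarrow> f x * complex_of_real (theta K)) (at_right 0)"
proof (unfold tendsto_iff, intro allI impI)
  fix \<eta> :: real assume \<eta>: "\<eta> > 0"
  have M0: "M \<ge> 0" using M[of 0] norm_ge_zero order_trans by blast
  obtain \<delta> where \<delta>: "\<delta> > 0" and nr: "\<And>y. dist x y < \<delta> \<Longrightarrow> norm (f y - f x * complex_of_real (indicator K (y - x))) \<le> \<eta> / 2"
    using near[of "\<eta>/2"] \<eta> by auto
  define C where "C = 2 * M * 2 powr (real CARD('n) / 2)"
  have "((\<lambda>e. C * exp (- (pi * \<delta>\<^sup>2 / 2) / e)) \<longlongrightarrow> C * 0) (at_right 0)"
    using \<delta> by (intro tendsto_mult tendsto_const exp_lim0) auto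
  then have ev1: "eventually (\<lambda>e. C * exp (- (pi * \<delta>\<^sup>2 / 2) / e) < \<eta> / 2) (at_right 0)"
    using \<eta> by (intro order_tendstoD(2)) auto
  show "eventually (\<lambda>eps. dist (gauss_conv eps f x) (f x * complex_of_real (theta K)) < \<eta>) (at_right 0)"
    using ev1 eventually_at_right_less[of 0]
  proof eventually_elim
    case (elim eps)
    then have eps: "eps > 0" and small: "C * exp (- (pi * \<delta>\<^sup>2 / 2) / eps) < \<eta> / 2" by auto
    define g where "g y = f x * complex_of_real (indicator K (y - x))" for y
    have gm[measurable]: "g \<in> borel_measurable lborel" unfolding g_def by measurable
    have gM: "norm (g y) \<le> M" for y using M[of x] M0 by (simp add: g_def norm_mult indicator_def)
    note ci = conv_integrable[OF fm M eps, of x]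
    note gi = conv_integrable[OF gm gM eps, of x]
    note ti = gk_tail[OF eps less_imp_le[OF \<delta>], of x]
    have hb: "has_bochner_integral lborel (\<lambda>y. indicator K (y - x) * gauss_kernel eps (x - y)) (theta K)"
      by (rule gk_cone_integral[OF Kb cone eps])
    have gint: "(\<integral>y. g y * complex_of_real (gauss_kernel eps (x - y)) \<partial>lborel) = f x * complex_of_real (theta K)"
    proof -
      have "(\<integral>y. g y * complex_of_real (gauss_kernel eps (x - y)) \<partial>lborel)
          = (\<integral>y. f x * complex_of_real (indicator K (y - x) * gauss_kernel eps (x - y)) \<partial>lborel)"
        by (intro Bochner_Integration.integral_cong) (simp_all add: g_def mult.assoc)
      also have "\<dots> = f x * complex_of_real (\<integral>y. indicator K (y - x) * gauss_kernel eps (x - y) \<partial>lborel)"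
        by (simp only: integral_mult_right_zero integral_complex_of_real)
      also have "(\<integral>y. indicator K (y - x) * gauss_kernel eps (x - y) \<partial>lborel) = theta K"
        using hb by (rule has_bochner_integral_integral_eq)
      finally show ?thesis .
    qed
    have diff: "gauss_conv eps f x - f x * complex_of_real (theta K)
        = (\<integral>y. (f y - g y) * complex_of_real (gauss_kernel eps (x - y)) \<partial>lborel)"
      unfolding gauss_conv_def gint[symmetric] using ci gi by (simp add: algebra_simps)
    have "norm (gauss_conv eps f x - f x * complex_of_real (theta K))
        \<le> (\<integral>y. norm ((f y - g y) * complex_of_real (gauss_kernel eps (x - y))) \<partial>lborel)"
      unfolding diff by (rule integral_norm_bound)
    also have "\<dots> \<le> (\<integral>y. \<eta> / 2 * gauss_kernel eps (x - y) + 2 * M * (indicator {y. \<delta> \<le> dist x y} y * gauss_kernel eps (x - y)) \<partial>lborel)"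
    proof (rule integral_mono)
      have "integrable lborel (\<lambda>y. (f y - g y) * complex_of_real (gauss_kernel eps (x - y)))"
        using ci gi by (simp add: algebra_simps)
      then show "integrable lborel (\<lambda>y. norm ((f y - g y) * complex_of_real (gauss_kernel eps (x - y))))"
        by (rule integrable_norm)
      show "integrable lborel (\<lambda>y. \<eta> / 2 * gauss_kernel eps (x - y) + 2 * M * (indicator {y. \<delta> \<le> dist x y} y * gauss_kernel eps (x - y)))"
        using ti(1) gk_total(1)[OF eps, of x] by simp
      fix y
      have G0: "gauss_kernel eps (x - y) \<ge> 0" by (rule gk_nonneg)
      show "norm ((f y - g y) * complex_of_real (gauss_kernel eps (x - y)))
          \<le> \<eta> / 2 * gauss_kernel eps (x - y) + 2 * M * (indicator {y. \<delta> \<le> dist x y} y * gauss_kernel eps (x - y))"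
      proof (cases "dist x y < \<delta>")
        case True
        then have "norm (f y - g y) \<le> \<eta> / 2" using nr unfolding g_def by blast
        then have "norm (f y - g y) * gauss_kernel eps (x - y) \<le> \<eta> / 2 * gauss_kernel eps (x - y)"
          using G0 by (rule mult_right_mono)
        then show ?thesis using True G0 by (simp add: norm_mult)
      next
        case False
        have "norm (f y - g y) \<le> 2 * M"
          using norm_triangle_ineq4[of "f y" "g y"] M[of y] gM[of y] by simp
        then have "norm (f y - g y) * gauss_kernel eps (x - y) \<le> 2 * M * gauss_kernel eps (x - y)"
          using G0 by (rule mult_right_mono)
        moreover have "0 \<le> \<eta> / 2 * gauss_kernel eps (x - y)" using \<eta> G0 by simp
        ultimately show ?thesis using False G0 by (simp add: norm_mult)
      qed
    qed
    also have "\<dots> = \<eta> / 2 * (\<integral>y. gauss_kernel eps (x - y) \<partial>lborel) + 2 * M * (\<integral>y. indicator {y. \<delta> \<le> dist x y} y * gauss_kernel eps (x - y) \<partial>lborel)"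
      using ti(1) gk_total(1)[OF eps, of x] by simp
    also have "\<dots> \<le> \<eta> / 2 + 2 * M * (2 powr (real CARD('n) / 2) * exp (- pi * \<delta>\<^sup>2 / (2 * eps)))"
      using ti(2) gk_total(2)[OF eps, of x] M0 by (simp add: mult_left_mono)
    also have "2 * M * (2 powr (real CARD('n) / 2) * exp (- pi * \<delta>\<^sup>2 / (2 * eps))) = C * exp (- (pi * \<delta>\<^sup>2 / 2) / eps)"
      by (simp add: C_def field_simps)
    also have "\<eta> / 2 + C * exp (- (pi * \<delta>\<^sup>2 / 2) / eps) < \<eta>" using small by simp
    finally show ?case by (simp add: dist_norm)
  qed
qed



lemma local_cone:
  fixes P :: "'a::euclidean_space set" and x :: 'a
  assumes poly: "polyhedron P" and cvx: "convex P" and xP: "x \<in> P"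
  defines "K \<equiv> {v. \<exists>e>0. x + e *\<^sub>R v \<in> P}"
  shows "K \<in> sets borel" and "\<And>v c. v \<in> K \<Longrightarrow> c > 0 \<Longrightarrow> c *\<^sub>R v \<in> K"
    and "\<exists>r0>0. \<forall>y. dist x y < r0 \<longrightarrow> (y \<in> P \<longleftrightarrow> y - x \<in> K)"
proof -
  obtain F where F: "finite F" "P = \<Inter>F" "\<forall>h\<in>F. \<exists>a b. a \<noteq> 0 \<and> h = {x. a \<bullet> x \<le> b}"
    using poly unfolding polyhedron_def by blast
  then obtain A B where AB: "\<And>h. h \<in> F \<Longrightarrow> h = {x. A h \<bullet> x \<le> B h}"
    by metis
  have clP: "closed P" using F AB
    by (metis closed_Inter closed_halfspace_le)
  show "\<And>v c. v \<in> K \<Longrightarrow> c > 0 \<Longrightarrow> c *\<^sub>R v \<in> K"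
  proof -
    fix v c assume "v \<in> K" "(c::real) > 0"
    then obtain e where "e > 0" "x + e *\<^sub>R v \<in> P" by (auto simp: K_def)
    then show "c *\<^sub>R v \<in> K" unfolding K_def using \<open>c > 0\<close>
      by (intro CollectI exI[of _ "e / c"]) auto
  qed
  have KU: "K = (\<Union>n. {v. x + (1 / Suc n) *\<^sub>R v \<in> P})"
  proof safe
    fix v assume "v \<in> K"
    then obtain e where e: "e > 0" "x + e *\<^sub>R v \<in> P" by (auto simp: K_def)
    obtain n where n: "1 / real (Suc n) < e" using e(1) by (metis nat_approx_posE)
    define t where "t = (1 / real (Suc n)) / e"
    have t1: "t \<le> 1" unfolding t_def using n e(1) by (subst divide_le_eq_1_pos) auto
    have t: "0 \<le> t" "t \<le> 1" using e t1 by (auto simp: t_def)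
    have "(1 - t) *\<^sub>R x + t *\<^sub>R (x + e *\<^sub>R v) \<in> P"
      using convexD_alt[OF cvx xP e(2) t] by simp
    moreover have "(1 - t) *\<^sub>R x + t *\<^sub>R (x + e *\<^sub>R v) = x + (1 / Suc n) *\<^sub>R v"
    proof -
      have "t * e = 1 / Suc n" using e(1) by (simp add: t_def)
      then show ?thesis by (simp add: algebra_simps scaleR_scaleR[symmetric])
    qed
    ultimately show "v \<in> (\<Union>n. {v. x + (1 / Suc n) *\<^sub>R v \<in> P})" by auto
  next
    fix v n assume "x + (1 / real (Suc n)) *\<^sub>R v \<in> P"
    then show "v \<in> K" unfolding K_def by (intro CollectI exI[of _ "1 / real (Suc n)"]) auto
  qed
  have "closed {v. x + (1 / Suc n) *\<^sub>R v \<in> P}" for n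
  proof -
    have "closed ((\<lambda>v. x + (1 / Suc n) *\<^sub>R v) -` P)"
      by (intro continuous_closed_vimage clP) (auto intro!: continuous_intros)
    then show ?thesis by (simp add: vimage_def)
  qed
  then show "K \<in> sets borel" unfolding KU
    by (intro sets.countable_UN borel_closed) auto
  have ev: "eventually (\<lambda>y. \<forall>h\<in>F. A h \<bullet> x < B h \<longrightarrow> A h \<bullet> y < B h) (nhds x)"
  proof (rule eventually_ball_finite[OF F(1)], rule ballI)
    fix h assume "h \<in> F"
    show "eventually (\<lambda>y. A h \<bullet> x < B h \<longrightarrow> A h \<bullet> y < B h) (nhds x)"
    proof (cases "A h \<bullet> x < B h")
      case True
      have "open {y. A h \<bullet> y < B h}" by (rule open_halfspace_lt)
      then have "eventually (\<lambda>y. y \<in> {y. A h \<bullet> y < B h}) (nhds x)"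
        using True by (intro eventually_nhds_in_open) auto
      then show ?thesis by auto
    qed auto
  qed
  then obtain r0 where r0: "r0 > 0" and r0h: "\<And>y. dist y x < r0 \<Longrightarrow> \<forall>h\<in>F. A h \<bullet> x < B h \<longrightarrow> A h \<bullet> y < B h"
    unfolding eventually_nhds_metric by blast
  show "\<exists>r0>0. \<forall>y. dist x y < r0 \<longrightarrow> (y \<in> P \<longleftrightarrow> y - x \<in> K)"
  proof (intro exI[of _ r0] conjI allI impI r0 iffI)
    fix y assume "y \<in> P"
    then show "y - x \<in> K" unfolding K_def by (intro CollectI exI[of _ 1]) auto
  next
    fix y assume dy: "dist x y < r0" and "y - x \<in> K"
    then obtain e where e: "e > 0" "x + e *\<^sub>R (y - x) \<in> P" by (auto simp: K_def)
    show "y \<in> P" unfolding F(2)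
    proof
      fix h assume h: "h \<in> F"
      have hx: "A h \<bullet> x \<le> B h" using xP h AB[OF h] F(2) by auto
      have he: "A h \<bullet> (x + e *\<^sub>R (y - x)) \<le> B h" using e(2) h AB[OF h] F(2) by auto
      show "y \<in> h"
      proof (cases "A h \<bullet> x < B h")
        case True
        then have "A h \<bullet> y < B h" using r0h[of y] dy h by (auto simp: dist_commute)
        then have "y \<in> {x. A h \<bullet> x \<le> B h}" by simp
        then show ?thesis by (metis AB[OF h])
      next
        case False
        then have eq: "A h \<bullet> x = B h" using hx by simp
        then have "e * (A h \<bullet> (y - x)) \<le> 0" using he by (simp add: inner_simps algebra_simps)
        then have "A h \<bullet> (y - x) \<le> 0" using e(1) by (simp add: mult_le_0_iff)
        then have "y \<in> {x. A h \<bullet> x \<le> B h}" using eq by (simp add: inner_simps)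
        then show ?thesis by (metis AB[OF h])
      qed
    qed
  qed
qed



lemma solid_angle_cone:
  fixes P K :: "(real ^ 'n) set" and x :: "real ^ 'n"
  assumes Pb[measurable]: "P \<in> sets borel" and Kb[measurable]: "K \<in> sets borel"
    and cone: "\<And>v c. v \<in> K \<Longrightarrow> c > 0 \<Longrightarrow> c *\<^sub>R v \<in> K"
    and r0: "r0 > 0" and loc: "\<And>y. dist x y < r0 \<Longrightarrow> (y \<in> P \<longleftrightarrow> y - x \<in> K)"
  shows "solid_angle P x = theta K"
proof -
  have eq: "measure lebesgue (ball x r \<inter> P) / measure lebesgue (ball x r) = theta K"
    if r: "0 < r" "r < r0" for r
  proof -
    have img: "ball x r \<inter> P = (\<lambda>v. r *\<^sub>R v + x) ` (K \<inter> ball 0 1)"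
    proof safe
      fix y assume y: "y \<in> ball x r" "y \<in> P"
      then have "y - x \<in> K" using loc[of y] r by auto
      then have "(1 / r) *\<^sub>R (y - x) \<in> K" using cone r by auto
      moreover have "norm ((1 / r) *\<^sub>R (y - x)) < 1"
      proof -
        have "norm ((1 / r) *\<^sub>R (y - x)) = norm (y - x) / r" using r by simp
        also have "\<dots> < 1" using y r by (simp add: dist_norm norm_minus_commute)
        finally show ?thesis .
      qed
      moreover have "y = r *\<^sub>R ((1 / r) *\<^sub>R (y - x)) + x" using r by simp
      ultimately show "y \<in> (\<lambda>v. r *\<^sub>R v + x) ` (K \<inter> ball 0 1)"
        by (intro image_eqI) (auto simp: dist_norm)
    next
      fix v assume v: "v \<in> K" "v \<in> ball 0 1"
      then have nv: "norm v < 1" by (simp add: dist_norm)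
      have "dist x (r *\<^sub>R v + x) = r * norm v" using r by (simp add: dist_norm)
      also have "\<dots> < r" using nv r by simp
      finally have d: "dist x (r *\<^sub>R v + x) < r" .
      then show "r *\<^sub>R v + x \<in> ball x r" by simp
      have "r *\<^sub>R v \<in> K" using cone v r by auto
      then show "r *\<^sub>R v + x \<in> P" using loc[of "r *\<^sub>R v + x"] d r by auto
    qed
    have img2: "ball x r = (\<lambda>v. r *\<^sub>R v + x) ` (ball 0 1)"
    proof safe
      fix y assume y: "y \<in> ball x r"
      have "norm ((1 / r) *\<^sub>R (y - x)) = norm (y - x) / r" using r by simp
      also have "\<dots> < 1" using y r by (simp add: dist_norm norm_minus_commute)
      finally have "(1 / r) *\<^sub>R (y - x) \<in> ball 0 1" by (simp add: dist_norm)
      moreover have "y = r *\<^sub>R ((1 / r) *\<^sub>R (y - x)) + x" using r by simp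
      ultimately show "y \<in> (\<lambda>v. r *\<^sub>R v + x) ` (ball 0 1)" by blast
    next
      fix v :: "real^'n" assume v: "v \<in> ball 0 1"
      have "dist x (r *\<^sub>R v + x) = r * norm v" using r by (simp add: dist_norm)
      also have "\<dots> < r" using v r by (simp add: dist_norm)
      finally show "r *\<^sub>R v + x \<in> ball x r" by simp
    qed
    have "measure lebesgue (ball x r \<inter> P) = \<bar>r\<bar> ^ DIM(real^'n) * measure lebesgue (K \<inter> ball 0 1)"
      unfolding img by (rule measure_lebesgue_affine)
    moreover have "measure lebesgue (ball x r) = \<bar>r\<bar> ^ DIM(real^'n) * measure lebesgue (ball (0::real^'n) 1)"
      unfolding img2 by (rule measure_lebesgue_affine)
    ultimately show ?thesis using r content_ball_pos[of 1 "0::real^'n"]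
      by (simp add: theta_def)
  qed
  have "((\<lambda>r. measure lebesgue (ball x r \<inter> P) / measure lebesgue (ball x r)) \<longlongrightarrow> theta K) (at_right 0)"
  proof (rule tendsto_eventually)
    have "eventually (\<lambda>r. r < r0) (at_right (0::real))"
      using r0 by (intro eventually_at_right_field[THEN iffD2]) (auto intro!: exI[of _ r0])
    then show "eventually (\<lambda>r. measure lebesgue (ball x r \<inter> P) / measure lebesgue (ball x r) = theta K) (at_right 0)"
      using eventually_at_right_less[of 0] by eventually_elim (rule eq)
  qed
  then show ?thesis unfolding solid_angle_def by (intro tendsto_Lim) auto
qed



lemma nat_gauss_summable:
  fixes c :: real assumes c: "c > 0"
  shows "(\<lambda>n::nat. exp (- c * (real n)\<^sup>2)) summable_on UNIV"
    and "(\<lambda>n::nat. exp (- c * (real n + 1)\<^sup>2)) summable_on UNIV"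
proof -
  have q: "exp (- c) < 1" using c by simp
  have g: "summable (\<lambda>n. exp (- c) ^ n)" using q by (intro summable_geometric) simp
  have b1: "exp (- c * (real n)\<^sup>2) \<le> exp (- c) ^ n" for n
  proof -
    have "real n \<le> (real n)\<^sup>2" by (cases n) (auto simp: power2_eq_square)
    then have "- c * (real n)\<^sup>2 \<le> - c * real n" using c by simp
    then show ?thesis by (simp add: exp_of_nat_mult[symmetric] mult.commute)
  qed
  have b2: "exp (- c * (real n + 1)\<^sup>2) \<le> exp (- c) ^ n" for n
  proof -
    have "real n \<le> (real n + 1)\<^sup>2" by (simp add: power2_eq_square algebra_simps)
    then have "- c * (real n + 1)\<^sup>2 \<le> - c * real n" using c by simp
    then show ?thesis by (simp add: exp_of_nat_mult[symmetric] mult.commute)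
  qed
  have "summable (\<lambda>n::nat. exp (- c * (real n)\<^sup>2))"
    by (rule summable_comparison_test[OF _ g]) (use b1 in auto)
  then show "(\<lambda>n::nat. exp (- c * (real n)\<^sup>2)) summable_on UNIV"
    by (subst summable_on_UNIV_nonneg_real_iff) auto
  have "summable (\<lambda>n::nat. exp (- c * (real n + 1)\<^sup>2))"
    by (rule summable_comparison_test[OF _ g]) (use b2 in auto)
  then show "(\<lambda>n::nat. exp (- c * (real n + 1)\<^sup>2)) summable_on UNIV"
    by (subst summable_on_UNIV_nonneg_real_iff) auto
qed

lemma int_gauss_summable:
  fixes c :: real assumes c: "c > 0"
  shows "(\<lambda>k::int. exp (- c * (real_of_int k)\<^sup>2)) summable_on UNIV"
proof -
  have U: "(UNIV :: int set) = range int \<union> range (\<lambda>n. - int n - 1)"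
  proof -
    have "k \<in> range int \<union> range (\<lambda>n. - int n - 1)" for k :: int
    proof (cases "k \<ge> 0")
      case True then show ?thesis by (metis UnI1 nonneg_int_cases rangeI)
    next
      case False
      then have "k = - int (nat (- k - 1)) - 1" by simp
      then show ?thesis by blast
    qed
    then show ?thesis by blast
  qed
  have s1: "(\<lambda>k::int. exp (- c * (real_of_int k)\<^sup>2)) summable_on range int"
    using nat_gauss_summable(1)[OF c] by (subst summable_on_reindex) (auto simp: o_def)
  have "(\<lambda>k::int. exp (- c * (real_of_int k)\<^sup>2)) \<circ> (\<lambda>n. - int n - 1) = (\<lambda>n::nat. exp (- c * (real n + 1)\<^sup>2))"
    by (auto simp: o_def power2_eq_square algebra_simps)
  then have s2: "(\<lambda>k::int. exp (- c * (real_of_int k)\<^sup>2)) summable_on range (\<lambda>n. - int n - 1)"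
    using nat_gauss_summable(2)[OF c] by (subst summable_on_reindex) (auto simp: inj_on_def)
  have "(\<lambda>k::int. exp (- c * (real_of_int k)\<^sup>2)) summable_on (range int \<union> range (\<lambda>n. - int n - 1))"
    by (rule summable_on_Un_disjoint[OF s1 s2]) auto
  then show ?thesis using U by simp
qed



lemma int_lattice_image: "(int_lattice :: (real^'n) set) = (\<lambda>g. \<chi> i. real_of_int (g i)) ` UNIV"
proof safe
  fix x :: "real^'n" assume "x \<in> int_lattice"
  then have "\<forall>i. x $ i \<in> \<int>" by (simp add: int_lattice_def)
  then have "x = (\<lambda>g. \<chi> i. real_of_int (g i)) (\<lambda>i. \<lfloor>x $ i\<rfloor>)" by (simp add: vec_eq_iff)
  then show "x \<in> (\<lambda>g. \<chi> i. real_of_int (g i)) ` UNIV" by (metis rangeI)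
next
  fix g :: "'n \<Rightarrow> int"
  show "(\<chi> i. real_of_int (g i)) \<in> int_lattice" by (simp add: int_lattice_def)
qed

lemma norm_vec_sq: "(norm (x :: real^'n))\<^sup>2 = (\<Sum>i\<in>UNIV. (x $ i)\<^sup>2)"
  by (simp add: norm_vec_def L2_set_def sum_nonneg)

lemma lattice_gauss_summable:
  fixes c :: real assumes c: "c > 0"
  shows "(\<lambda>x::real^'n. exp (- c * (norm x)\<^sup>2)) summable_on int_lattice"
proof -
  define h :: "('n \<Rightarrow> int) \<Rightarrow> real^'n" where "h g = (\<chi> i. real_of_int (g i))" for g
  have inj: "inj_on h UNIV" by (auto simp: inj_on_def h_def vec_eq_iff)
  have eq: "((\<lambda>x::real^'n. exp (- c * (norm x)\<^sup>2)) \<circ> h) g = (\<Prod>i\<in>UNIV. exp (- c * (real_of_int (g i))\<^sup>2))" for g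
    by (simp add: h_def norm_vec_sq sum_distrib_left exp_sum[symmetric] sum_negf)
  have one: "Infinite_Set_Sum.abs_summable_on (\<lambda>k::int. exp (- c * (real_of_int k)\<^sup>2)) UNIV"
    using int_gauss_summable[OF c] by (subst abs_summable_equivalent[symmetric]) simp
  have "Infinite_Set_Sum.abs_summable_on (\<lambda>g. \<Prod>i\<in>(UNIV::'n set). exp (- c * (real_of_int (g i))\<^sup>2)) (PiE UNIV (\<lambda>_. UNIV))"
    by (rule abs_summable_on_prod_PiE) (use one in auto)
  then have "Infinite_Set_Sum.abs_summable_on (\<lambda>g. \<Prod>i\<in>(UNIV::'n set). exp (- c * (real_of_int (g i))\<^sup>2)) UNIV"
    by (simp add: PiE_UNIV_domain)
  then have "(\<lambda>g. norm (\<Prod>i\<in>(UNIV::'n set). exp (- c * (real_of_int (g i))\<^sup>2))) summable_on UNIV"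
    by (subst abs_summable_equivalent)
  then have "(\<lambda>g. \<Prod>i\<in>(UNIV::'n set). exp (- c * (real_of_int (g i))\<^sup>2)) summable_on UNIV"
    by (simp add: prod_nonneg)
  then have "((\<lambda>x::real^'n. exp (- c * (norm x)\<^sup>2)) \<circ> h) summable_on UNIV"
  proof -
    have "((\<lambda>x::real^'n. exp (- c * (norm x)\<^sup>2)) \<circ> h) = (\<lambda>g. \<Prod>i\<in>(UNIV::'n set). exp (- c * (real_of_int (g i))\<^sup>2))"
      by (rule ext) (rule eq)
    then show ?thesis using \<open>(\<lambda>g. \<Prod>i\<in>(UNIV::'n set). exp (- c * (real_of_int (g i))\<^sup>2)) summable_on UNIV\<close> by simp
  qed
  then show ?thesis
    unfolding int_lattice_image h_def[symmetric] by (subst summable_on_reindex[OF inj])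
qed



lemma lattice_ball_finite: "finite (int_lattice \<inter> cball (0::real^'n) r)"
proof -
  define h :: "('n \<Rightarrow> int) \<Rightarrow> real^'n" where "h g = (\<chi> i. real_of_int (g i))" for g
  have "int_lattice \<inter> cball (0::real^'n) r \<subseteq> h ` (PiE UNIV (\<lambda>_. {-\<lceil>r\<rceil>..\<lceil>r\<rceil>}))"
  proof
    fix x :: "real^'n" assume x: "x \<in> int_lattice \<inter> cball 0 r"
    then have xi: "\<forall>i. x $ i \<in> \<int>" by (simp add: int_lattice_def)
    have nx: "norm x \<le> r" using x by simp
    have "x = h (\<lambda>i. \<lfloor>x $ i\<rfloor>)" using xi by (simp add: h_def vec_eq_iff)
    moreover have "(\<lambda>i. \<lfloor>x $ i\<rfloor>) \<in> PiE UNIV (\<lambda>_. {-\<lceil>r\<rceil>..\<lceil>r\<rceil>})"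
    proof -
      have "\<lfloor>x $ i\<rfloor> \<in> {-\<lceil>r\<rceil>..\<lceil>r\<rceil>}" for i
      proof -
        have a: "\<bar>x $ i\<bar> \<le> r" using component_le_norm_cart[of x i] nx by simp
        have "real_of_int \<lfloor>x $ i\<rfloor> = x $ i" using xi by simp
        then have "\<bar>real_of_int \<lfloor>x $ i\<rfloor>\<bar> \<le> r" using a by (simp only:)
        then have "real_of_int \<bar>\<lfloor>x $ i\<rfloor>\<bar> \<le> r" by simp
        then have "\<bar>\<lfloor>x $ i\<rfloor>\<bar> \<le> \<lceil>r\<rceil>" by (simp add: le_ceiling_iff)
        then show ?thesis by auto
      qed
      then show ?thesis by auto
    qed
    ultimately show "x \<in> h ` (PiE UNIV (\<lambda>_. {-\<lceil>r\<rceil>..\<lceil>r\<rceil>}))" by blast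
  qed
  moreover have "finite (PiE (UNIV::'n set) (\<lambda>_. {-\<lceil>r\<rceil>..\<lceil>r\<rceil>}))"
    by (intro finite_PiE) auto
  ultimately show ?thesis using finite_subset by blast
qed

lemma pointwise_limit:
  fixes P :: "(real ^ 'n) set" and f :: "real ^ 'n \<Rightarrow> complex"
  assumes poly: "polytope P" and cont: "continuous_on P f" and zero: "\<And>x. x \<notin> P \<Longrightarrow> f x = 0"
    and ne: "P \<noteq> {}"
    and fm[measurable]: "f \<in> borel_measurable lborel" and M: "\<And>y. norm (f y) \<le> M"
  shows "((\<lambda>eps. gauss_conv eps f x) \<longlongrightarrow> f x * complex_of_real (solid_angle P x)) (at_right 0)"
proof (cases "x \<in> P")
  case xP: True
  have cvx: "convex P" using poly by (rule polytope_imp_convex)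
  have clP: "closed P" using polytope_imp_compact[OF poly] by (rule compact_imp_closed)
  define K where "K = {v. \<exists>e>0. x + e *\<^sub>R v \<in> P}"
  note lc = local_cone[OF polytope_imp_polyhedron[OF poly] cvx xP, folded K_def]
  obtain r0 where r0: "r0 > 0" and loc: "\<And>y. dist x y < r0 \<Longrightarrow> (y \<in> P \<longleftrightarrow> y - x \<in> K)"
    using lc(3) by blast
  have sa: "solid_angle P x = theta K"
    using solid_angle_cone[OF borel_closed[OF clP] lc(1) lc(2) r0 loc] by blast
  show ?thesis unfolding sa
  proof (rule conv_limit_point[OF fm M lc(1) lc(2)])
    fix \<eta> :: real assume \<eta>: "\<eta> > 0"
    obtain d where d: "d > 0" and dc: "\<And>y. y \<in> P \<Longrightarrow> dist y x < d \<Longrightarrow> dist (f y) (f x) < \<eta>"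
    proof -
      have "\<forall>\<epsilon>>0. \<exists>\<delta>>0. \<forall>x'\<in>P. dist x' x < \<delta> \<longrightarrow> dist (f x') (f x) < \<epsilon>"
        using cont xP unfolding continuous_on_iff by blast
      then show ?thesis using \<eta> that by blast
    qed
    show "\<exists>\<delta>>0. \<forall>y. dist x y < \<delta> \<longrightarrow> norm (f y - f x * complex_of_real (indicator K (y - x))) \<le> \<eta>"
    proof (intro exI[of _ "min d r0"] conjI allI impI)
      show "min d r0 > 0" using d r0 by simp
      fix y assume y: "dist x y < min d r0"
      show "norm (f y - f x * complex_of_real (indicator K (y - x))) \<le> \<eta>"
      proof (cases "y \<in> P")
        case True
        then have "y - x \<in> K" using loc[of y] y by simp
        moreover have "dist (f y) (f x) < \<eta>" using dc[OF True] y by (simp add: dist_commute)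
        ultimately show ?thesis by (simp add: dist_norm)
      next
        case False
        then have "y - x \<notin> K" using loc[of y] y by simp
        then show ?thesis using zero[OF False] \<eta> by simp
      qed
    qed
  qed
next
  case xP: False
  have clP: "closed P" using polytope_imp_compact[OF poly] by (rule compact_imp_closed)
  define \<delta> where "\<delta> = infdist x P"
  have d: "\<delta> > 0" unfolding \<delta>_def using infdist_pos_not_in_closed[OF clP ne xP] .
  have M0: "M \<ge> 0" using M[of 0] norm_ge_zero order_trans by blast
  have far: "\<And>y. f y \<noteq> 0 \<Longrightarrow> \<delta> \<le> dist x y"
  proof -
    fix y assume "f y \<noteq> 0"
    then have "y \<in> P" using zero by blast
    then show "\<delta> \<le> dist x y" unfolding \<delta>_def by (rule infdist_le)
  qed
  have "((\<lambda>e. M * 2 powr (real CARD('n) / 2) * exp (- (pi * \<delta>\<^sup>2 / 2) / e)) \<longlongrightarrow> M * 2 powr (real CARD('n) / 2) * 0) (at_right 0)"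
    using d by (intro tendsto_mult tendsto_const exp_lim0) auto
  then have lim: "((\<lambda>e. M * 2 powr (real CARD('n) / 2) * exp (- (pi * \<delta>\<^sup>2 / 2) / e)) \<longlongrightarrow> 0) (at_right 0)" by simp
  have "((\<lambda>eps. gauss_conv eps f x) \<longlongrightarrow> 0) (at_right 0)"
  proof (rule Lim_null_comparison[OF _ lim])
    show "eventually (\<lambda>e. norm (gauss_conv e f x) \<le> M * 2 powr (real CARD('n) / 2) * exp (- (pi * \<delta>\<^sup>2 / 2) / e)) (at_right 0)"
      using eventually_at_right_less[of 0]
    proof eventually_elim
      case (elim e)
      have "norm (gauss_conv e f x) \<le> M * (2 powr (real CARD('n) / 2) * exp (- pi * \<delta>\<^sup>2 / (2 * e)))"
        using conv_bound[OF fm M _ less_imp_le[OF d] far] elim by simp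
      then show ?case by (simp add: mult_ac)
    qed
  qed
  then show ?thesis using zero[OF xP] by simp
qed



lemma delta_sq:
  fixes t R :: real assumes R: "R \<ge> 0" and t: "t \<ge> 0"
  shows "t\<^sup>2 / 2 - R\<^sup>2 \<le> (max 0 (t - R))\<^sup>2"
proof (cases "t \<ge> R")
  case True
  have "0 \<le> (t - 2 * R)\<^sup>2" by simp
  then have "t\<^sup>2 / 2 - R\<^sup>2 \<le> (t - R)\<^sup>2" by (simp add: power2_eq_square algebra_simps)
  then show ?thesis using True by simp
next
  case False
  then have "t\<^sup>2 \<le> R\<^sup>2" using t by (intro power_mono) auto
  moreover have "max 0 (t - R) = 0" using False by simp
  ultimately show ?thesis using zero_le_power2[of R] by (simp only: power2_eq_square)
qed

lemma tail_exp:
  fixes e \<delta> :: real assumes e: "0 < e" "e \<le> 1" and d: "2 \<le> \<delta>"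
  shows "exp (- pi * \<delta>\<^sup>2 / (2 * e)) \<le> exp (- pi / e) * exp (- pi * \<delta>\<^sup>2 / 4)"
proof -
  have d2: "4 \<le> \<delta>\<^sup>2" using d power_mono[of 2 \<delta> 2] by simp
  have "\<delta>\<^sup>2 * e \<le> \<delta>\<^sup>2" using e by (simp add: mult_left_le)
  then have "4 + \<delta>\<^sup>2 * e \<le> 2 * \<delta>\<^sup>2" using d2 by simp
  then have "(4 + \<delta>\<^sup>2 * e) / (4 * e) \<le> (2 * \<delta>\<^sup>2) / (4 * e)" using e by (intro divide_right_mono) auto
  moreover have "1 / e + \<delta>\<^sup>2 / 4 = (4 + \<delta>\<^sup>2 * e) / (4 * e)" using e by (simp add: field_simps)
  moreover have "\<delta>\<^sup>2 / (2 * e) = (2 * \<delta>\<^sup>2) / (4 * e)" using e by (simp add: field_simps)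
  ultimately have "1 / e + \<delta>\<^sup>2 / 4 \<le> \<delta>\<^sup>2 / (2 * e)" by (simp only:)
  then have "pi * (1 / e + \<delta>\<^sup>2 / 4) \<le> pi * (\<delta>\<^sup>2 / (2 * e))" by (intro mult_left_mono) auto
  then have "- pi * \<delta>\<^sup>2 / (2 * e) \<le> - pi / e + - pi * \<delta>\<^sup>2 / 4" by (simp add: algebra_simps)
  then show ?thesis by (simp add: exp_add[symmetric])
qed



theorem theorem6p2:
  fixes P :: "(real ^ 'n) set" and f :: "real ^ 'n \<Rightarrow> complex"
  assumes "polytope P" and "convex P" and "interior P \<noteq> {}"
    and "continuous_on P f" and "\<And>x. x \<notin> P \<Longrightarrow> f x = 0"
  shows "(\<forall>eps>0. (gauss_conv eps f) summable_on int_lattice) \<and>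
    ((\<lambda>eps. \<Sum>\<^sub>\<infinity>x\<in>int_lattice. gauss_conv eps f x) \<longlongrightarrow>
      (\<Sum>x\<in>int_lattice \<inter> P. f x * complex_of_real (solid_angle P x))) (at_right 0)"
proof -
  note poly = assms(1) and cont = assms(4) and zero = assms(5)
  have cpt: "compact P" using poly by (rule polytope_imp_compact)
  have clP: "closed P" using cpt by (rule compact_imp_closed)
  have ne: "P \<noteq> {}" using assms(3) interior_subset by blast
  have fm[measurable]: "f \<in> borel_measurable lborel"
  proof -
    have "(\<lambda>y. indicator P y *\<^sub>R f y) \<in> borel_measurable borel"
      by (rule borel_measurable_continuous_on_indicator[OF borel_closed[OF clP] cont])
    moreover have "(\<lambda>y. indicator P y *\<^sub>R f y) = f" using zero by (auto simp: indicator_def fun_eq_iff)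
    ultimately show ?thesis by simp
  qed
  obtain M where M0: "M > 0" and Mb: "\<And>z. z \<in> f ` P \<Longrightarrow> norm z \<le> M"
    using compact_imp_bounded[OF compact_continuous_image[OF cont cpt]] bounded_pos by metis
  have M: "norm (f y) \<le> M" for y
  proof (cases "y \<in> P")
    case True then show ?thesis using Mb by blast
  next
    case False then show ?thesis using zero M0 by simp
  qed
  obtain R where R0: "R > 0" and Rb: "\<And>y. y \<in> P \<Longrightarrow> norm y \<le> R"
    using compact_imp_bounded[OF cpt] bounded_pos by metis
  define C0 where "C0 = M * 2 powr (real CARD('n) / 2)"
  have C0: "C0 \<ge> 0" using M0 by (simp add: C0_def)
  define \<Delta> where "\<Delta> x = max 0 (norm x - R)" for x :: "real^'n"
  have key: "norm (gauss_conv eps f x) \<le> C0 * exp (- pi * (\<Delta> x)\<^sup>2 / (2 * eps))" if eps: "eps > 0" for eps x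
  proof -
    have far: "\<Delta> x \<le> dist x y" if "f y \<noteq> 0" for y
    proof -
      have "y \<in> P" using that zero by blast
      then have "norm y \<le> R" by (rule Rb)
      moreover have "norm x - norm y \<le> dist x y" by (simp add: dist_norm norm_triangle_ineq2)
      ultimately show ?thesis by (simp add: \<Delta>_def)
    qed
    show ?thesis using conv_bound[OF fm M eps _ far] by (simp add: \<Delta>_def C0_def mult_ac)
  qed
  have dsq: "(norm x)\<^sup>2 / 2 - R\<^sup>2 \<le> (\<Delta> x)\<^sup>2" for x
    unfolding \<Delta>_def using delta_sq[of R "norm x"] R0 by simp

  have summ: "(\<lambda>x. norm (gauss_conv eps f x)) summable_on int_lattice" if eps: "eps > 0" for eps
  proof (rule summable_on_comparison_test)
    define a where "a = pi / (4 * eps)"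
    have a: "a > 0" using eps by (simp add: a_def)
    show "(\<lambda>x. C0 * exp (pi * R\<^sup>2 / (2 * eps)) * exp (- a * (norm x)\<^sup>2)) summable_on int_lattice"
      by (intro summable_on_cmult_right lattice_gauss_summable a)
    fix x :: "real^'n"
    show "0 \<le> norm (gauss_conv eps f x)" by simp
    have "- pi * (\<Delta> x)\<^sup>2 / (2 * eps) \<le> pi * R\<^sup>2 / (2 * eps) + - a * (norm x)\<^sup>2"
    proof -
      have "pi * ((norm x)\<^sup>2 / 2 - R\<^sup>2) \<le> pi * (\<Delta> x)\<^sup>2" using dsq[of x] by (intro mult_left_mono) auto
      then have "pi * ((norm x)\<^sup>2 / 2 - R\<^sup>2) / (2 * eps) \<le> pi * (\<Delta> x)\<^sup>2 / (2 * eps)"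
        using eps by (intro divide_right_mono) auto
      moreover have "pi * ((norm x)\<^sup>2 / 2 - R\<^sup>2) / (2 * eps) = - (pi * R\<^sup>2 / (2 * eps) + - a * (norm x)\<^sup>2)"
        using eps by (simp add: a_def field_simps)
      ultimately show ?thesis by simp
    qed
    then have "exp (- pi * (\<Delta> x)\<^sup>2 / (2 * eps)) \<le> exp (pi * R\<^sup>2 / (2 * eps)) * exp (- a * (norm x)\<^sup>2)"
      by (simp add: exp_add[symmetric])
    then have "C0 * exp (- pi * (\<Delta> x)\<^sup>2 / (2 * eps)) \<le> C0 * (exp (pi * R\<^sup>2 / (2 * eps)) * exp (- a * (norm x)\<^sup>2))"
      using C0 by (rule mult_left_mono)
    then show "norm (gauss_conv eps f x) \<le> C0 * exp (pi * R\<^sup>2 / (2 * eps)) * exp (- a * (norm x)\<^sup>2)"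
      using key[OF eps, of x] by (simp add: mult_ac)
  qed
  have part1: "\<forall>eps>0. (gauss_conv eps f) summable_on int_lattice"
    using summ by (auto intro: abs_summable_summable)

  define \<rho> where "\<rho> = 2 * R + 2"
  define S where "S = int_lattice \<inter> cball (0::real^'n) \<rho>"
  define T where "T = int_lattice - S"
  have finS: "finite S" unfolding S_def by (rule lattice_ball_finite)
  have ST: "int_lattice = S \<union> T" "S \<inter> T = {}" unfolding S_def T_def by auto
  define L where "L x = f x * complex_of_real (solid_angle P x)" for x
  have lim1: "((\<lambda>eps. \<Sum>x\<in>S. gauss_conv eps f x) \<longlongrightarrow> (\<Sum>x\<in>S. L x)) (at_right 0)"
    unfolding L_def by (intro tendsto_sum pointwise_limit[OF poly cont zero ne fm M])
  have sumS: "(\<Sum>x\<in>S. L x) = (\<Sum>x\<in>int_lattice \<inter> P. f x * complex_of_real (solid_angle P x))"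
  proof -
    have sub: "int_lattice \<inter> P \<subseteq> S" unfolding S_def \<rho>_def using Rb R0 by force
    show ?thesis unfolding L_def
      by (rule sum.mono_neutral_right[OF finS sub]) (use zero in \<open>auto simp: S_def\<close>)
  qed
  define a where "a = pi / 8"
  define C1 where "C1 = C0 * exp (pi * R\<^sup>2 / 4) * (\<Sum>\<^sub>\<infinity>x\<in>(int_lattice::(real^'n) set). exp (- a * (norm x)\<^sup>2))"
  have a: "a > 0" by (simp add: a_def)
  have gs: "(\<lambda>x::real^'n. exp (- a * (norm x)\<^sup>2)) summable_on int_lattice"
    by (rule lattice_gauss_summable[OF a])
  have tailb: "norm (\<Sum>\<^sub>\<infinity>x\<in>T. gauss_conv eps f x) \<le> C1 * exp (- pi / eps)" if eps: "0 < eps" "eps \<le> 1" for eps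
  proof -
    have sT: "(\<lambda>x. norm (gauss_conv eps f x)) summable_on T"
      by (rule summable_on_subset_banach[OF summ[OF eps(1)]]) (auto simp: T_def)
    have pt: "norm (gauss_conv eps f x) \<le> C0 * exp (pi * R\<^sup>2 / 4) * exp (- pi / eps) * exp (- a * (norm x)\<^sup>2)"
      if xT: "x \<in> T" for x
    proof -
      have nx: "norm x > \<rho>" using xT by (auto simp: T_def S_def)
      then have D: "\<Delta> x = norm x - R" using R0 by (simp add: \<Delta>_def \<rho>_def)
      have D2: "2 \<le> \<Delta> x" using nx R0 by (simp add: D \<rho>_def)
      have "exp (- pi * (\<Delta> x)\<^sup>2 / (2 * eps)) \<le> exp (- pi / eps) * exp (- pi * (\<Delta> x)\<^sup>2 / 4)"
        by (rule tail_exp[OF eps D2])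
      also have "exp (- pi * (\<Delta> x)\<^sup>2 / 4) \<le> exp (pi * R\<^sup>2 / 4) * exp (- a * (norm x)\<^sup>2)"
      proof -
        have "pi * ((norm x)\<^sup>2 / 2 - R\<^sup>2) \<le> pi * (\<Delta> x)\<^sup>2" using dsq[of x] by (intro mult_left_mono) auto
        then have "- pi * (\<Delta> x)\<^sup>2 / 4 \<le> pi * R\<^sup>2 / 4 + - a * (norm x)\<^sup>2"
          by (simp add: a_def field_simps)
        then show ?thesis by (simp add: exp_add[symmetric])
      qed
      finally have "exp (- pi * (\<Delta> x)\<^sup>2 / (2 * eps)) \<le> exp (- pi / eps) * (exp (pi * R\<^sup>2 / 4) * exp (- a * (norm x)\<^sup>2))"
        by (simp add: mult_left_mono)
      then have "C0 * exp (- pi * (\<Delta> x)\<^sup>2 / (2 * eps)) \<le> C0 * (exp (- pi / eps) * (exp (pi * R\<^sup>2 / 4) * exp (- a * (norm x)\<^sup>2)))"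
        using C0 by (rule mult_left_mono)
      then show ?thesis using key[OF eps(1), of x] by (simp add: mult_ac)
    qed
    have "norm (\<Sum>\<^sub>\<infinity>x\<in>T. gauss_conv eps f x) \<le> (\<Sum>\<^sub>\<infinity>x\<in>T. norm (gauss_conv eps f x))"
      by (rule norm_infsum_bound[OF sT])
    also have "\<dots> \<le> (\<Sum>\<^sub>\<infinity>x\<in>T. C0 * exp (pi * R\<^sup>2 / 4) * exp (- pi / eps) * exp (- a * (norm x)\<^sup>2))"
    proof (rule infsum_mono[OF sT])
      show "(\<lambda>x. C0 * exp (pi * R\<^sup>2 / 4) * exp (- pi / eps) * exp (- a * (norm x)\<^sup>2)) summable_on T"
        by (intro summable_on_cmult_right summable_on_subset_banach[OF gs]) (auto simp: T_def)
    qed (rule pt)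
    also have "\<dots> = C0 * exp (pi * R\<^sup>2 / 4) * exp (- pi / eps) * (\<Sum>\<^sub>\<infinity>x\<in>T. exp (- a * (norm x)\<^sup>2))"
      by (rule infsum_cmult_right) (intro summable_on_subset_banach[OF gs], auto simp: T_def)
    also have "\<dots> \<le> C0 * exp (pi * R\<^sup>2 / 4) * exp (- pi / eps) * (\<Sum>\<^sub>\<infinity>x\<in>(int_lattice::(real^'n) set). exp (- a * (norm x)\<^sup>2))"
    proof -
      have gT: "(\<lambda>x::real^'n. exp (- a * (norm x)\<^sup>2)) summable_on T"
        by (rule summable_on_subset_banach[OF gs]) (auto simp: T_def)
      have mono: "infsum (\<lambda>x::real^'n. exp (- a * (norm x)\<^sup>2)) T \<le> infsum (\<lambda>x::real^'n. exp (- a * (norm x)\<^sup>2)) int_lattice"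
        by (rule Infinite_Sum.infsum_mono2[OF gT gs]) (auto simp: T_def)
      show ?thesis by (rule mult_left_mono[OF mono]) (use C0 in simp)
    qed
    finally show ?thesis by (simp add: C1_def mult_ac)
  qed
  have lim2: "((\<lambda>eps. \<Sum>\<^sub>\<infinity>x\<in>T. gauss_conv eps f x) \<longlongrightarrow> 0) (at_right 0)"
  proof (rule Lim_null_comparison)
    have "((\<lambda>e. C1 * exp (- pi / e)) \<longlongrightarrow> C1 * 0) (at_right 0)"
      by (intro tendsto_mult tendsto_const exp_lim0) auto
    then show "((\<lambda>e. C1 * exp (- pi / e)) \<longlongrightarrow> 0) (at_right 0)" by simp
    have "eventually (\<lambda>e::real. e < 1) (at_right 0)"
      by (intro eventually_at_right_field[THEN iffD2]) (auto intro!: exI[of _ 1])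
    then show "eventually (\<lambda>e. norm (\<Sum>\<^sub>\<infinity>x\<in>T. gauss_conv e f x) \<le> C1 * exp (- pi / e)) (at_right 0)"
      using eventually_at_right_less[of 0] by eventually_elim (intro tailb, auto)
  qed
  have split: "eventually (\<lambda>eps. (\<Sum>\<^sub>\<infinity>x\<in>int_lattice. gauss_conv eps f x)
      = (\<Sum>x\<in>S. gauss_conv eps f x) + (\<Sum>\<^sub>\<infinity>x\<in>T. gauss_conv eps f x)) (at_right 0)"
    using eventually_at_right_less[of 0]
  proof eventually_elim
    case (elim eps)
    have s: "(gauss_conv eps f) summable_on int_lattice" using part1 elim by blast
    have "(\<Sum>\<^sub>\<infinity>x\<in>S \<union> T. gauss_conv eps f x) = (\<Sum>\<^sub>\<infinity>x\<in>S. gauss_conv eps f x) + (\<Sum>\<^sub>\<infinity>x\<in>T. gauss_conv eps f x)"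
      by (rule infsum_Un_disjoint) (use s ST finS in \<open>auto intro: summable_on_subset_banach\<close>)
    then show ?case using ST finS by simp
  qed
  have "((\<lambda>eps. (\<Sum>x\<in>S. gauss_conv eps f x) + (\<Sum>\<^sub>\<infinity>x\<in>T. gauss_conv eps f x)) \<longlongrightarrow> (\<Sum>x\<in>S. L x) + 0) (at_right 0)"
    by (rule tendsto_add[OF lim1 lim2])
  then have "((\<lambda>eps. \<Sum>\<^sub>\<infinity>x\<in>int_lattice. gauss_conv eps f x) \<longlongrightarrow> (\<Sum>x\<in>S. L x)) (at_right 0)"
    using split by (simp add: tendsto_cong)
  then show ?thesis using part1 sumS by simp
qed


end
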